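(* Let $M$ be a smooth hypersurface immersed in $\mathbb R^{n+1}$ and suppose that at some point, for some $\varepsilon>0$, the second fundamental form satisfies $\alpha\ge \varepsilon H g>0$ (i.e. $k_1\ge\varepsilon H>0$). Then $\varepsilon\le 1/n$, and at that point $$|H\nabla\alpha-\alpha\nabla H|^2\ \ge\ \frac{n-1}{2}\,\varepsilon^2H^2|\nabla A|^2 .$$
   Context: $g$ is the induced metric, $\alpha$ the second fundamental form, $A$ the Weingarten map ($\alpha=g(A\cdot,\cdot)$), $k_1\le\dots\le k_n$ the principal curvatures, $H=\sum k_i$, $\nabla$ the Levi-Civita connection of $g$; norms are taken with respect to $g$, and $H\nabla\alpha-\alpha\nabla H$ denotes the 3-tensor $H\nabla_i\alpha_{jl}-\alpha_{jl}\nabla_iH$. *)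

theory Defs
  imports "HOL-Analysis.Analysis"
begin

text \<open>Pointwise data of a hypersurface M^n in R^(n+1) at a point p, written in an
 orthonormal frame e_1..e_n of T_pM (index type 'n, n = CARD('n)):
 sff i j = alpha(e_i,e_j) (= g(A e_i, e_j)), the second fundamental form;
 nsff i j l = (nabla_{e_i} alpha)(e_j,e_l), its covariant derivative.
 The metric is the identity in this frame, so norms are plain sums of squares.\<close>

definition mean_curv :: "real^'n^'n \<Rightarrow> real" where
  "mean_curv sff = (\<Sum>i\<in>UNIV. sff $ i $ i)"

definition grad_mean_curv :: "('n \<Rightarrow> 'n \<Rightarrow> 'n \<Rightarrow> real) \<Rightarrow> 'n \<Rightarrow> real" where
  "grad_mean_curv nsff i = (\<Sum>k\<in>UNIV. nsff i k k)"

definition form_ge :: "real^'n^'n \<Rightarrow> real \<Rightarrow> bool" where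
  "form_ge sff c \<longleftrightarrow> (\<forall>v::real^'n. v \<bullet> (sff *v v) \<ge> c * (v \<bullet> v))"

text \<open>|nabla A|^2 = |nabla alpha|^2.\<close>
definition norm2_3tensor :: "('n \<Rightarrow> 'n \<Rightarrow> 'n \<Rightarrow> real) \<Rightarrow> real" where
  "norm2_3tensor T = (\<Sum>i\<in>UNIV. \<Sum>j\<in>UNIV. \<Sum>l\<in>UNIV. (T i j l)\<^sup>2)"

end

theory Submission
  imports Defs
begin
definition vv :: "'n \<Rightarrow> real \<Rightarrow> 'n \<Rightarrow> real \<Rightarrow> real^'n" where
  "vv i x j y = (\<chi> k. (if k = i then x else 0) + (if k = j then y else 0))"

lemma mult_if0: "(a::real) * (if P then x else 0) = (if P then a*x else 0)" by simp

lemma mv_vv: "((A::real^'n^'n) *v vv i x j y) $ l = A$l$i * x + A$l$j * y"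
  unfolding vv_def matrix_vector_mult_def
  by (simp add: distrib_left mult_if0 sum.distrib)

lemma quad_vv: "vv i x j y \<bullet> ((A::real^'n^'n) *v vv i x j y)
   = x*x*A$i$i + x*y*A$i$j + y*x*A$j$i + y*y*A$j$j"
  unfolding inner_vec_def mv_vv
  by (simp add: vv_def distrib_right mult_if0 sum.distrib algebra_simps)

lemma vv_self: "vv i x j y \<bullet> vv i x j y = x*x + 2*x*y*(if i = j then 1 else 0) + y*y"
  unfolding inner_vec_def
  by (simp add: vv_def distrib_right distrib_left mult_if0 sum.distrib algebra_simps)

lemma form_sq:
  fixes A :: "real^'n^'n"
  assumes f: "\<And>v. v \<bullet> (A *v v) \<ge> m * (v \<bullet> v)" and m: "m > 0"
  shows "(A *v v) \<bullet> (A *v v) \<ge> m^2 * (v \<bullet> v)"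
proof -
  have "m * (norm v)^2 \<le> v \<bullet> (A *v v)" using f[of v] by (simp add: power2_norm_eq_inner)
  also have "\<dots> \<le> norm v * norm (A *v v)" using norm_cauchy_schwarz by blast
  finally have h: "m * (norm v)^2 \<le> norm v * norm (A *v v)" .
  have "m * norm v \<le> norm (A *v v)"
  proof (cases "norm v = 0")
    case True thus ?thesis by simp
  next
    case False
    hence "norm v > 0" by simp
    with h show ?thesis by (simp add: power2_eq_square mult.assoc mult.commute[of m])
  qed
  hence "(m * norm v)^2 \<le> (norm (A *v v))^2"
    using m by (intro power_mono) auto
  thus ?thesis by (simp add: power2_norm_eq_inner power_mult_distrib)
qed

lemma E_y:
  fixes G :: "'n \<Rightarrow> real" and a :: "'n \<Rightarrow> 'n \<Rightarrow> real"
  shows "(\<Sum>i\<in>UNIV. \<Sum>j\<in>UNIV. \<Sum>l\<in>UNIV. (G j)^2 * (a i l)^2)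
      = (\<Sum>i\<in>UNIV. (G i)^2) * (\<Sum>i\<in>UNIV. \<Sum>j\<in>UNIV. (a i j)^2)"
proof -
  have "(\<Sum>i\<in>UNIV. \<Sum>j\<in>UNIV. \<Sum>l\<in>UNIV. (G j)^2 * (a i l)^2)
     = (\<Sum>j\<in>UNIV. \<Sum>i\<in>UNIV. \<Sum>l\<in>UNIV. (G j)^2 * (a i l)^2)" by (rule sum.swap)
  also have "\<dots> = (\<Sum>j\<in>UNIV. (G j)^2 * (\<Sum>i\<in>UNIV. \<Sum>l\<in>UNIV. (a i l)^2))"
    by (simp only: sum_distrib_left)
  finally show ?thesis by (simp only: sum_distrib_right)
qed

lemma E_z:
  fixes G :: "'n \<Rightarrow> real" and a :: "'n \<Rightarrow> 'n \<Rightarrow> real"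
  shows "(\<Sum>i\<in>UNIV. \<Sum>j\<in>UNIV. \<Sum>l\<in>UNIV. (G l)^2 * (a i j)^2)
      = (\<Sum>i\<in>UNIV. (G i)^2) * (\<Sum>i\<in>UNIV. \<Sum>j\<in>UNIV. (a i j)^2)"
proof -
  have "(\<Sum>i\<in>UNIV. \<Sum>j\<in>UNIV. \<Sum>l\<in>UNIV. (G l)^2 * (a i j)^2)
     = (\<Sum>i\<in>UNIV. \<Sum>l\<in>UNIV. \<Sum>j\<in>UNIV. (G l)^2 * (a i j)^2)"
    by (intro sum.cong refl sum.swap)
  thus ?thesis using E_y[of G a] by simp
qed

lemma E_yz:
  fixes G :: "'n \<Rightarrow> real" and a :: "'n \<Rightarrow> 'n \<Rightarrow> real"
  shows "(\<Sum>i\<in>UNIV. \<Sum>j\<in>UNIV. \<Sum>l\<in>UNIV. (G j * a i l) * (G l * a i j))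
      = (\<Sum>i\<in>UNIV. (\<Sum>j\<in>UNIV. a i j * G j)^2)"
  by (simp add: power2_eq_square sum_product algebra_simps)

lemma E_S:
  fixes G :: "'n \<Rightarrow> real" and a :: "'n \<Rightarrow> 'n \<Rightarrow> real"
  shows "(\<Sum>i\<in>UNIV. \<Sum>j\<in>UNIV. \<Sum>l\<in>UNIV. ((G j * a i l + G l * a i j)/2)^2)
      = ((\<Sum>i\<in>UNIV. (G i)^2) * (\<Sum>i\<in>UNIV. \<Sum>j\<in>UNIV. (a i j)^2)
          + (\<Sum>i\<in>UNIV. (\<Sum>j\<in>UNIV. a i j * G j)^2)) / 2"
proof -
  have pt: "\<And>i j l. ((G j * a i l + G l * a i j)/2)^2
      = ((G j)^2 * (a i l)^2)/4 + ((G l)^2 * (a i j)^2)/4 + ((G j * a i l) * (G l * a i j))/2"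
    by (simp add: power2_eq_square field_simps)
  show ?thesis
    unfolding pt sum.distrib sum_divide_distrib[symmetric] E_y E_z E_yz by simp
qed

lemma E_q:
  fixes G :: "'n \<Rightarrow> real" and a :: "'n \<Rightarrow> 'n \<Rightarrow> real"
  shows "(\<Sum>i\<in>UNIV. \<Sum>j\<in>UNIV. \<Sum>l\<in>UNIV. (a l i * G i) * (a l j * G j))
      = (\<Sum>i\<in>UNIV. (\<Sum>j\<in>UNIV. a i j * G j)^2)"
proof -
  have "(\<Sum>i\<in>UNIV. \<Sum>j\<in>UNIV. \<Sum>l\<in>UNIV. (a l i * G i) * (a l j * G j))
      = (\<Sum>i\<in>UNIV. \<Sum>l\<in>UNIV. \<Sum>j\<in>UNIV. (a l i * G i) * (a l j * G j))"
    by (intro sum.cong refl sum.swap)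
  also have "\<dots> = (\<Sum>l\<in>UNIV. \<Sum>i\<in>UNIV. \<Sum>j\<in>UNIV. (a l i * G i) * (a l j * G j))"
    by (rule sum.swap)
  finally show ?thesis by (simp add: power2_eq_square sum_product)
qed

theorem mainTheorem3:
  fixes sff :: "real^'n^'n" and nsff :: "'n \<Rightarrow> 'n \<Rightarrow> 'n \<Rightarrow> real" and \<epsilon> :: real
  assumes sym: "\<And>i j. sff $ i $ j = sff $ j $ i"
    and nsym: "\<And>i j l. nsff i j l = nsff i l j"
    and codazzi: "\<And>i j l. nsff i j l = nsff j i l"
    and eps_pos: "\<epsilon> > 0"
    and pinch: "form_ge sff (\<epsilon> * mean_curv sff)"
    and H_pos: "\<epsilon> * mean_curv sff > 0"
  shows "\<epsilon> \<le> 1 / real CARD('n)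
    \<and> norm2_3tensor (\<lambda>i j l. mean_curv sff * nsff i j l - sff $ j $ l * grad_mean_curv nsff i)
        \<ge> (real CARD('n) - 1) / 2 * \<epsilon>\<^sup>2 * (mean_curv sff)\<^sup>2 * norm2_3tensor nsff"
proof -
  define H where "H = mean_curv sff"
  define m where "m = \<epsilon> * H"
  define n where "n = real CARD('n)"
  define a where "a = (\<lambda>i j. sff $ i $ j)"
  define G where "G = grad_mean_curv nsff"
  define b where "b = nsff"
  have mpos: "m > 0" using H_pos by (simp add: m_def H_def)
  have Hpos: "H > 0" using mpos eps_pos by (simp add: m_def zero_less_mult_iff)
  have fg: "\<And>v. v \<bullet> (sff *v v) \<ge> m * (v \<bullet> v)"
    using pinch by (simp add: form_ge_def m_def H_def)
  have diag: "a i i \<ge> m" for i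
    using fg[of "vv i 1 i 0"] by (simp add: quad_vv vv_self a_def)
  have Hsum: "H = (\<Sum>i\<in>UNIV. a i i)" by (simp add: H_def a_def mean_curv_def)
  have "n * m \<le> H" unfolding Hsum n_def
    using sum_mono[of UNIV "\<lambda>i. m" "\<lambda>i. a i i"] diag by simp
  hence nle: "n * \<epsilon> \<le> 1" using Hpos by (simp add: m_def)
  have npos: "n \<ge> 1" by (simp add: n_def)
  have part1: "\<epsilon> \<le> 1 / n" using nle npos by (simp add: field_simps)
  define c where "c = (n - 1) / 2 * \<epsilon>^2"
  have c0: "c \<ge> 0" using npos by (simp add: c_def)
  have "\<epsilon>^2 \<le> (1/n)^2" using part1 eps_pos by (intro power_mono) auto
  hence "c \<le> (n - 1) / 2 * (1/n)^2" unfolding c_def using npos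
    by (intro mult_left_mono) auto
  also have "\<dots> \<le> 1/4"
  proof -
    have "(n - 1) / 2 * (1/n)^2 = (n-1)/(2*n^2)" by (simp add: power2_eq_square)
    also have "\<dots> \<le> 1/4"
    proof -
      have "4*(n-1) \<le> 2*n^2" using zero_le_power2[of "n-1"]
        by (simp add: power2_eq_square algebra_simps)
      moreover have "2*n^2 > 0" using npos by simp
      ultimately show ?thesis by (simp add: divide_le_eq)
    qed
    finally show ?thesis .
  qed
  finally have c4: "c \<le> 1/4" .
  define A2 where "A2 = (\<Sum>i\<in>UNIV. \<Sum>j\<in>UNIV. (a i j)^2)"
  define g2 where "g2 = (\<Sum>i\<in>UNIV. (G i)^2)"
  define q where "q = (\<Sum>i\<in>UNIV. (\<Sum>j\<in>UNIV. a i j * G j)^2)"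
  have asym: "a i j = a j i" for i j by (simp add: a_def sym)
  have minor: "(a i j)^2 \<le> a i i * a j j" for i j
  proof -
    have "0 \<le> m * (vv i (a j j) j (- a i j) \<bullet> vv i (a j j) j (- a i j))"
      using mpos by (intro mult_nonneg_nonneg) auto
    also have "\<dots> \<le> vv i (a j j) j (- a i j) \<bullet> (sff *v vv i (a j j) j (- a i j))" by (rule fg)
    also have "\<dots> = a j j * (a i i * a j j - (a i j)^2)"
      unfolding quad_vv using asym[of j i] by (simp add: a_def power2_eq_square algebra_simps)
    finally have "0 \<le> a j j * (a i i * a j j - (a i j)^2)" .
    moreover have "a j j > 0" using diag[of j] mpos by simp
    ultimately show ?thesis by (simp add: zero_le_mult_iff)
  qed
  have A2le: "A2 \<le> H^2"
  proof -
    have "A2 \<le> (\<Sum>i\<in>UNIV. \<Sum>j\<in>UNIV. a i i * a j j)" unfolding A2_def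
      by (intro sum_mono minor)
    also have "\<dots> = H^2" by (simp add: Hsum power2_eq_square sum_product)
    finally show ?thesis .
  qed
  have E6: "g2 * A2 - q \<ge> (n - 1) * m^2 * g2"
  proof -
    define v where "v = (\<lambda>i j. vv i (- G j) j (G i))"
    have vv_eq: "v i j \<bullet> v i j = (G j)^2 + (G i)^2 - 2 * (if i = j then (G i)^2 else 0)" for i j
      unfolding v_def vv_self by (simp add: power2_eq_square)
    have Av_eq: "(sff *v v i j) \<bullet> (sff *v v i j)
       = (\<Sum>l\<in>UNIV. (a l i)^2 * (G j)^2 + (a l j)^2 * (G i)^2 - 2 * ((a l i * G i) * (a l j * G j)))" for i j
      unfolding inner_vec_def v_def mv_vv by (intro sum.cong refl) (simp add: a_def power2_eq_square algebra_simps)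
    have s1: "(\<Sum>i\<in>UNIV. \<Sum>j\<in>UNIV. v i j \<bullet> v i j) = 2 * n * g2 - 2 * g2"
      unfolding vv_eq sum_subtractf sum.distrib
      by (simp add: g2_def n_def sum_distrib_left[symmetric] if_distrib sum.delta cong: if_cong)
    have t1: "(\<Sum>i\<in>UNIV. \<Sum>j\<in>UNIV. \<Sum>l\<in>UNIV. (a l i)^2 * (G j)^2) = g2 * A2"
    proof -
      have "(\<Sum>i\<in>UNIV. \<Sum>j\<in>UNIV. \<Sum>l\<in>UNIV. (a l i)^2 * (G j)^2)
          = (\<Sum>i\<in>UNIV. \<Sum>l\<in>UNIV. \<Sum>j\<in>UNIV. (G j)^2 * (a l i)^2)"
        by (intro sum.cong refl sum.swap[THEN trans]) (simp add: mult.commute)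
      also have "\<dots> = (\<Sum>l\<in>UNIV. \<Sum>i\<in>UNIV. \<Sum>j\<in>UNIV. (G j)^2 * (a l i)^2)" by (rule sum.swap)
      also have "\<dots> = g2 * A2" unfolding g2_def A2_def
        by (simp only: sum_distrib_left sum_distrib_right mult.commute)
      finally show ?thesis .
    qed
    have t2: "(\<Sum>i\<in>UNIV. \<Sum>j\<in>UNIV. \<Sum>l\<in>UNIV. (a l j)^2 * (G i)^2) = g2 * A2"
    proof -
      have "(\<Sum>i\<in>UNIV. \<Sum>j\<in>UNIV. \<Sum>l\<in>UNIV. (a l j)^2 * (G i)^2)
          = (\<Sum>j\<in>UNIV. \<Sum>i\<in>UNIV. \<Sum>l\<in>UNIV. (a l j)^2 * (G i)^2)" by (rule sum.swap)
      also have "\<dots> = g2 * A2" using t1 by simp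
      finally show ?thesis .
    qed
    have s2: "(\<Sum>i\<in>UNIV. \<Sum>j\<in>UNIV. (sff *v v i j) \<bullet> (sff *v v i j)) = 2 * g2 * A2 - 2 * q"
      unfolding Av_eq sum_subtractf sum.distrib sum_distrib_left[symmetric] t1 t2 E_q q_def by simp
    have "(\<Sum>i\<in>UNIV. \<Sum>j\<in>UNIV. m^2 * (v i j \<bullet> v i j))
       \<le> (\<Sum>i\<in>UNIV. \<Sum>j\<in>UNIV. (sff *v v i j) \<bullet> (sff *v v i j))"
      by (intro sum_mono form_sq[OF fg mpos])
    hence "m^2 * (2 * n * g2 - 2 * g2) \<le> 2 * g2 * A2 - 2 * q"
      unfolding s2 sum_distrib_left[symmetric] s1 .
    thus ?thesis by (simp add: algebra_simps)
  qed
  define B where "B = norm2_3tensor nsff"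
  define p where "p = (\<Sum>i\<in>UNIV. \<Sum>j\<in>UNIV. \<Sum>l\<in>UNIV. b i j l * (a j l * G i))"
  define X where "X = norm2_3tensor (\<lambda>i j l. mean_curv sff * nsff i j l - sff $ j $ l * grad_mean_curv nsff i)"
  have E1: "X = H^2 * B - 2 * H * p + g2 * A2"
  proof -
    have pt: "(H * b i j l - a j l * G i)^2 = H^2 * (b i j l)^2 - 2 * H * (b i j l * (a j l * G i))
       + (G i)^2 * (a j l)^2" for i j l
      by (simp add: power2_eq_square algebra_simps)
    have z: "(\<Sum>i\<in>UNIV. \<Sum>j\<in>UNIV. \<Sum>l\<in>UNIV. (G i)^2 * (a j l)^2) = g2 * A2"
    proof -
      have "g2 * A2 = (\<Sum>i\<in>UNIV. (G i)^2 * A2)" by (simp add: g2_def sum_distrib_right)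
      also have "\<dots> = (\<Sum>i\<in>UNIV. \<Sum>j\<in>UNIV. \<Sum>l\<in>UNIV. (G i)^2 * (a j l)^2)"
        by (simp only: A2_def sum_distrib_left)
      finally show ?thesis by simp
    qed
    have X2: "X = (\<Sum>i\<in>UNIV. \<Sum>j\<in>UNIV. \<Sum>l\<in>UNIV. (H * b i j l - a j l * G i)^2)"
      by (simp add: X_def norm2_3tensor_def H_def a_def G_def b_def)
    show ?thesis unfolding X2 pt sum.distrib sum_subtractf sum_distrib_left[symmetric] z
      by (simp add: B_def p_def norm2_3tensor_def b_def g2_def A2_def sum_distrib_right)
  qed
  have Py: "(\<Sum>i\<in>UNIV. \<Sum>j\<in>UNIV. \<Sum>l\<in>UNIV. b i j l * (G j * a i l)) = p"
  proof -
    have "(\<Sum>i\<in>UNIV. \<Sum>j\<in>UNIV. \<Sum>l\<in>UNIV. b i j l * (G j * a i l))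
       = (\<Sum>j\<in>UNIV. \<Sum>i\<in>UNIV. \<Sum>l\<in>UNIV. b i j l * (G j * a i l))" by (rule sum.swap)
    also have "\<dots> = p" unfolding p_def
      by (intro sum.cong refl) (simp add: b_def codazzi[of _ _ ] mult.commute)
    finally show ?thesis .
  qed
  have Pz: "(\<Sum>i\<in>UNIV. \<Sum>j\<in>UNIV. \<Sum>l\<in>UNIV. b i j l * (G l * a i j)) = p"
  proof -
    have "(\<Sum>i\<in>UNIV. \<Sum>j\<in>UNIV. \<Sum>l\<in>UNIV. b i j l * (G l * a i j))
       = (\<Sum>i\<in>UNIV. \<Sum>l\<in>UNIV. \<Sum>j\<in>UNIV. b i j l * (G l * a i j))"
      by (intro sum.cong refl sum.swap)
    also have "\<dots> = (\<Sum>i\<in>UNIV. \<Sum>j\<in>UNIV. \<Sum>l\<in>UNIV. b i j l * (G j * a i l))"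
      by (intro sum.cong refl) (simp add: b_def nsym[of i j l for i j l])
    finally show ?thesis using Py by simp
  qed
  define S where "S = (\<lambda>i j l. (G j * a i l + G l * a i j)/2)"
  have pS: "(\<Sum>i\<in>UNIV. \<Sum>j\<in>UNIV. \<Sum>l\<in>UNIV. b i j l * S i j l) = p"
  proof -
    have "b i j l * S i j l = (b i j l * (G j * a i l)) / 2 + (b i j l * (G l * a i j)) / 2" for i j l
      by (simp add: S_def algebra_simps add_divide_distrib)
    hence "(\<Sum>i\<in>UNIV. \<Sum>j\<in>UNIV. \<Sum>l\<in>UNIV. b i j l * S i j l)
       = (\<Sum>i\<in>UNIV. \<Sum>j\<in>UNIV. \<Sum>l\<in>UNIV. b i j l * (G j * a i l)) / 2
         + (\<Sum>i\<in>UNIV. \<Sum>j\<in>UNIV. \<Sum>l\<in>UNIV. b i j l * (G l * a i j)) / 2"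
      by (simp add: sum.distrib sum_divide_distrib)
    thus ?thesis using Py Pz by simp
  qed
  have S2: "(\<Sum>i\<in>UNIV. \<Sum>j\<in>UNIV. \<Sum>l\<in>UNIV. (S i j l)^2) = (g2 * A2 + q) / 2"
    unfolding S_def E_S g2_def A2_def q_def ..
  have trm: "2 * (1 - c) * H * (b i j l * S i j l) \<le> (1 - c)^2 * H^2 * (b i j l)^2 + (S i j l)^2" for i j l
    using zero_le_power2[of "(1 - c) * H * b i j l - S i j l"]
    by (simp add: power2_eq_square algebra_simps)
  have "(\<Sum>i\<in>UNIV. \<Sum>j\<in>UNIV. \<Sum>l\<in>UNIV. 2 * (1 - c) * H * (b i j l * S i j l))
     \<le> (\<Sum>i\<in>UNIV. \<Sum>j\<in>UNIV. \<Sum>l\<in>UNIV. (1 - c)^2 * H^2 * (b i j l)^2 + (S i j l)^2)"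
    by (intro sum_mono trm)
  hence key: "2 * (1 - c) * H * p \<le> (1 - c)^2 * H^2 * B + (g2 * A2 + q) / 2"
    unfolding sum.distrib sum_distrib_left[symmetric] pS S2
    by (simp add: B_def norm2_3tensor_def b_def)
  have g2nn: "g2 \<ge> 0" unfolding g2_def by (intro sum_nonneg) simp
  have Bnn: "B \<ge> 0" unfolding B_def norm2_3tensor_def by (intro sum_nonneg) simp
  have cm: "(n - 1) * m^2 = 2 * c * H^2" by (simp add: c_def m_def power_mult_distrib)
  have "c * g2 * A2 \<le> c * g2 * H^2" using A2le c0 g2nn by (simp add: mult_left_mono)
  moreover have "g2 * A2 - q \<ge> 2 * (c * g2 * H^2)" using E6 cm by (simp add: algebra_simps)
  ultimately have r0: "0 \<le> (g2 * A2 - q) / 2 - c * g2 * A2" by (simp add: field_simps)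
  moreover have "(1 - c) * (g2 * A2) - (g2 * A2 + q) / 2 = (g2 * A2 - q) / 2 - c * g2 * A2"
    by (simp add: algebra_simps)
  ultimately have rest: "(1 - c) * (g2 * A2) - (g2 * A2 + q) / 2 \<ge> 0" by simp
  have "(1 - c) * X \<ge> (1 - c) * (c * H^2 * B)"
    unfolding E1 using key rest by (simp add: algebra_simps power2_eq_square)
  hence "X \<ge> c * H^2 * B" using c4 by simp
  thus ?thesis using part1 by (simp add: X_def c_def H_def B_def n_def)
qed

end
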